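(* Let $q$ be a prime power, $e\ge 2$, $r$ a positive integer, let $\xi$ be a primitive element of $\mathbb{F}_{q^e}^*$, and for integers $m$ let $f_m(x)=x^r(x^{q-1}+\xi^m)\in\mathbb{F}_{q^e}[x]$. If $f_j(x)$ does not permute $\mathbb{F}_{q^e}$ for every $0\le j<q-1$, then $f_m(x)$ does not permute $\mathbb{F}_{q^e}$ for every $0\le m<q^e-1$. *)

theory Defs
  imports "HOL-Computational_Algebra.Polynomial" "HOL-Number_Theory.Prime_Powers" "HOL-Library.Cardinality"
begin

definition permutes_field :: "'a::{finite,field} poly \<Rightarrow> bool" where
  "permutes_field p \<longleftrightarrow> bij (poly p)"

definition primitive_element :: "'a::{finite,field} \<Rightarrow> bool" where
  "primitive_element \<xi> \<longleftrightarrow> \<xi> \<noteq> 0 \<and> (\<forall>y. y \<noteq> 0 \<longrightarrow> (\<exists>k::nat. y = \<xi> ^ k))"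

definition fpoly :: "nat \<Rightarrow> nat \<Rightarrow> 'a::{finite,field} \<Rightarrow> nat \<Rightarrow> 'a poly" where
  "fpoly q r \<xi> m = monom 1 r * (monom 1 (q - 1) + [:\<xi> ^ m:])"

end

theory Submission
  imports Defs
begin

lemma poly_fpoly: "poly (fpoly q r \<xi> m) x = x ^ r * (x ^ (q - 1) + \<xi> ^ m)"
  by (simp add: fpoly_def poly_monom)

theorem proposition5p5:
  fixes \<xi> :: "'a::{finite,field}" and q e r :: nat
  assumes "primepow q"
    and "e \<ge> 2"
    and "r > 0"
    and "CARD('a) = q ^ e"
    and "primitive_element \<xi>"
    and "\<forall>j < q - 1. \<not> permutes_field (fpoly q r \<xi> j)"
  shows "\<forall>m < q ^ e - 1. \<not> permutes_field (fpoly q r \<xi> m)"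
proof (intro allI impI notI)
  fix m assume "m < q ^ e - 1" and pm: "permutes_field (fpoly q r \<xi> m)"
  have q1: "q > 1" using assms(1) primepow_gt_Suc_0 by auto
  have xi0: "\<xi> \<noteq> 0" using assms(5) by (simp add: primitive_element_def)
  define j where "j = m mod (q - 1)"
  define k where "k = m div (q - 1)"
  define a where "a = \<xi> ^ k"
  have a0: "a \<noteq> 0" using xi0 by (simp add: a_def)
  have jlt: "j < q - 1" using q1 by (simp add: j_def)
  have xm: "\<xi> ^ m = a ^ (q - 1) * \<xi> ^ j"
  proof -
    have "m = k * (q - 1) + j" by (simp add: j_def k_def div_mult_mod_eq)
    then have "\<xi> ^ m = \<xi> ^ (k * (q - 1)) * \<xi> ^ j" by (metis power_add)
    then show ?thesis by (simp add: a_def power_mult)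
  qed
  have key: "poly (fpoly q r \<xi> m) (a * x) = a ^ (r + (q - 1)) * poly (fpoly q r \<xi> j) x" for x
    by (simp add: poly_fpoly xm power_mult_distrib power_add algebra_simps)
  have injm: "inj (poly (fpoly q r \<xi> m))" using pm by (simp add: permutes_field_def bij_def)
  have "inj (poly (fpoly q r \<xi> j))"
  proof (rule injI)
    fix x y assume "poly (fpoly q r \<xi> j) x = poly (fpoly q r \<xi> j) y"
    then have "poly (fpoly q r \<xi> m) (a * x) = poly (fpoly q r \<xi> m) (a * y)" by (simp add: key)
    then have "a * x = a * y" using injm by (simp add: inj_eq)
    then show "x = y" using a0 by simp
  qed
  then have "permutes_field (fpoly q r \<xi> j)"
    by (simp add: permutes_field_def bij_def finite_UNIV_inj_surj)
  then show False using assms(6) jlt by blast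
qed

end
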